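(* Let $e_1,\dots,e_m$ ($m\ge2$) be training domains, $\mathcal{F}$ a class of predictors, and for $f\in\mathcal{F}$ let $\mathcal{R}^{e_1}(f),\dots,\mathcal{R}^{e_m}(f)\in\mathbb{R}$ be its risks, with sample mean $\hat\mu_f=\frac1m\sum_{i=1}^m\mathcal{R}^{e_i}(f)$ and sample standard deviation $\hat\sigma_f=\big(\frac{1}{m-1}\sum_{i=1}^m(\mathcal{R}^{e_i}(f)-\hat\mu_f)^2\big)^{1/2}$. For $\alpha\in(0,1)$ let $\hat f_\alpha\in\arg\min_{f\in\mathcal{F}}\,\hat\mu_f+\Phi^{-1}(\alpha)\hat\sigma_f$ (assumed to exist), where $\Phi^{-1}$ is the standard normal quantile function. Assume 1. $\mathcal{F}$ contains an invariant-risk predictor $f_0$ with finite mean risk, i.e. $\hat\sigma_{f_0}=0$ and $\hat\mu_{f_0}<\infty$; and 2. $\mu_*:=\inf_{f\in\mathcal{F}}\hat\mu_f>-\infty$. Then $\lim_{\alpha\to1}\hat\sigma_{\hat f_\alpha}=0$ and $\limsup_{\alpha\to1}\hat\mu_{\hat f_\alpha}\le\hat\mu_{f_0}$.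
   Context: $\hat f_\alpha$ is the predictor minimizing the $\alpha$-quantile of the Gaussian distribution $\mathcal{N}(\hat\mu_f,\hat\sigma_f^2)$ fitted to the training-domain risks of $f$. *)

theory Defs
  imports "HOL-Probability.Probability"
begin

definition std_normal_cdf :: "real \<Rightarrow> real" where
  "std_normal_cdf x = measure (density lborel std_normal_density) {..x}"

definition std_normal_quantile :: "real \<Rightarrow> real" where
  "std_normal_quantile a = Inf {x. a \<le> std_normal_cdf x}"

definition sample_mean :: "nat \<Rightarrow> ('f \<Rightarrow> nat \<Rightarrow> real) \<Rightarrow> 'f \<Rightarrow> real" where
  "sample_mean m R f = (\<Sum>i<m. R f i) / real m"

definition sample_sd :: "nat \<Rightarrow> ('f \<Rightarrow> nat \<Rightarrow> real) \<Rightarrow> 'f \<Rightarrow> real" where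
  "sample_sd m R f = sqrt ((\<Sum>i<m. (R f i - sample_mean m R f)\<^sup>2) / (real m - 1))"

end

theory Submission imports Defs begin

lemma cdf_eq: "std_normal_cdf x = cdf std_normal_distribution x"
  by (simp add: std_normal_cdf_def cdf_def)

lemma tail_pos: "emeasure (density lborel std_normal_density) {M<..} \<noteq> 0"
proof
  assume "emeasure (density lborel std_normal_density) {M<..} = 0"
  hence "(\<integral>\<^sup>+ x. ennreal (std_normal_density x) * indicator {M<..} x \<partial>lborel) = 0"
    by (subst (asm) emeasure_density) auto
  hence ae: "AE x in lborel. ennreal (std_normal_density x) * indicator {M<..} x = 0"
    by (subst (asm) nn_integral_0_iff_AE) auto
  have pos: "\<And>x. 0 < std_normal_density x" by (simp add: normal_density_pos)
  have "AE x in lborel. x \<notin> {M<..}"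
  proof (rule eventually_mono[OF ae])
    fix x assume h: "ennreal (std_normal_density x) * indicator {M<..} x = 0"
    have "0 < std_normal_density x" by (rule pos)
    then show "x \<notin> {M<..}" using h by (auto simp: indicator_def split: if_splits)
  qed
  hence "emeasure lborel {M<..} = 0"
    by (subst AE_iff_measurable[symmetric, where N="{M<..}"]) auto
  moreover have "emeasure lborel {M<..M+1} = 1" by simp
  moreover have "emeasure lborel {M<..M+1} \<le> emeasure lborel {M<..}"
    by (intro emeasure_mono) auto
  ultimately show False by simp
qed

lemma cdf_lt1: "std_normal_cdf M < 1"
proof -
  interpret real_distribution std_normal_distribution by (rule real_dist_normal_dist)
  have e: "emeasure std_normal_distribution {M<..} = ennreal (prob {M<..})" by (rule emeasure_eq_measure)
  have "prob {M<..} \<noteq> 0" using tail_pos[of M] unfolding e by auto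
  moreover have "prob {M<..} = 1 - prob {..M}"
    using prob_compl[of "{..M}"] by (simp add: Compl_eq_Diff_UNIV[symmetric] Compl_atMost)
  moreover have "prob {M<..} \<ge> 0" by simp
  moreover have "prob {..M} \<le> 1" by (rule prob_le_1)
  ultimately have "prob {..M} < 1" by linarith
  thus ?thesis by (simp add: std_normal_cdf_def)
qed

lemma quant_top: "filterlim std_normal_quantile at_top (at_left 1)"
  unfolding filterlim_at_top
proof
  fix M :: real
  interpret real_distribution std_normal_distribution by (rule real_dist_normal_dist)
  have lt: "std_normal_cdf M < 1" by (rule cdf_lt1)
  show "eventually (\<lambda>a. M \<le> std_normal_quantile a) (at_left 1)"
    using eventually_at_left_real[OF lt]
  proof eventually_elim
    case (elim a)
    have "\<forall>\<^sub>F x in at_top. cdf std_normal_distribution x > a"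
      using cdf_lim_at_top_prob elim by (auto simp: order_tendsto_iff)
    then obtain x where "cdf std_normal_distribution x > a"
      using eventually_happens' trivial_limit_at_top_linorder by blast
    hence ne: "{x. a \<le> std_normal_cdf x} \<noteq> {}" by (auto simp: cdf_eq intro: less_imp_le)
    have "\<And>y. a \<le> std_normal_cdf y \<Longrightarrow> M \<le> y"
    proof (rule ccontr)
      fix y assume "a \<le> std_normal_cdf y" "\<not> M \<le> y"
      hence "std_normal_cdf y \<le> std_normal_cdf M" by (simp add: cdf_eq cdf_nondecreasing)
      with elim \<open>a \<le> std_normal_cdf y\<close> show False by simp
    qed
    thus ?case unfolding std_normal_quantile_def using ne by (auto intro: cInf_greatest)
  qed
qed
theorem propositionA4:
  fixes m :: nat and R :: "'f \<Rightarrow> nat \<Rightarrow> real" and F :: "'f set"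
    and fhat :: "real \<Rightarrow> 'f" and f0 :: 'f
  assumes m2: "m \<ge> 2"
    and fhat_min: "\<And>a. 0 < a \<Longrightarrow> a < 1 \<Longrightarrow> fhat a \<in> F \<and>
        (\<forall>f\<in>F. sample_mean m R (fhat a) + std_normal_quantile a * sample_sd m R (fhat a)
               \<le> sample_mean m R f + std_normal_quantile a * sample_sd m R f)"
    and f0: "f0 \<in> F" "sample_sd m R f0 = 0"
    and bdd: "bdd_below (sample_mean m R ` F)"
  shows "((\<lambda>a. sample_sd m R (fhat a)) \<longlongrightarrow> 0) (at_left 1) \<and>
         Limsup (at_left 1) (\<lambda>a. ereal (sample_mean m R (fhat a))) \<le> ereal (sample_mean m R f0)"
proof -
  define mu where "mu = sample_mean m R"
  define sd where "sd = sample_sd m R"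
  define q where "q = std_normal_quantile"
  obtain L where L: "\<And>f. f \<in> F \<Longrightarrow> L \<le> mu f"
    using bdd unfolding mu_def bdd_below_def by auto
  define C where "C = mu f0 - L"
  have sd_nn: "\<And>f. 0 \<le> sd f"
  proof -
    fix f have "real m - 1 \<ge> 0" using m2 by simp
    then show "0 \<le> sd f" unfolding sd_def sample_sd_def by (intro real_sqrt_ge_zero divide_nonneg_nonneg sum_nonneg) auto
  qed
  have key: "\<And>a. 0 < a \<Longrightarrow> a < 1 \<Longrightarrow> mu (fhat a) + q a * sd (fhat a) \<le> mu f0"
  proof -
    fix a :: real assume a: "0 < a" "a < 1"
    from fhat_min[OF a] f0(1) have "sample_mean m R (fhat a) + std_normal_quantile a * sample_sd m R (fhat a)
               \<le> sample_mean m R f0 + std_normal_quantile a * sample_sd m R f0" by blast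
    then show "mu (fhat a) + q a * sd (fhat a) \<le> mu f0" using f0(2) by (simp add: mu_def sd_def q_def)
  qed
  have ev01: "eventually (\<lambda>a. 0 < a \<and> a < 1) (at_left (1::real))"
    by (rule eventually_mono[OF eventually_at_left_real[of 0 "1::real"]]) auto
  have qtop: "filterlim q at_top (at_left 1)" unfolding q_def by (rule quant_top)
  hence evq: "eventually (\<lambda>a. 1 \<le> q a) (at_left 1)" by (auto simp: filterlim_at_top)
  have bnd: "eventually (\<lambda>a. 0 \<le> sd (fhat a) \<and> sd (fhat a) \<le> C / q a \<and> mu (fhat a) \<le> mu f0) (at_left 1)"
    using ev01 evq
  proof eventually_elim
    case (elim a)
    have k: "mu (fhat a) + q a * sd (fhat a) \<le> mu f0" using key elim by auto
    have "L \<le> mu (fhat a)" using L fhat_min elim by auto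
    hence "q a * sd (fhat a) \<le> C" using k unfolding C_def by linarith
    hence "sd (fhat a) \<le> C / q a" using elim by (simp add: field_simps mult.commute)
    moreover have "0 \<le> q a * sd (fhat a)" using elim sd_nn by simp
    ultimately show ?case using sd_nn k by auto
  qed
  have lim: "((\<lambda>a. C / q a) \<longlongrightarrow> 0) (at_left 1)"
    by (rule tendsto_divide_0[OF tendsto_const filterlim_at_top_imp_at_infinity[OF qtop]])
  have t1: "((\<lambda>a. sd (fhat a)) \<longlongrightarrow> 0) (at_left 1)"
    by (rule tendsto_sandwich[OF eventually_mono[OF bnd] eventually_mono[OF bnd] tendsto_const lim]) auto
  have "Limsup (at_left 1) (\<lambda>a. ereal (mu (fhat a))) \<le> ereal (mu f0)"
    by (rule Limsup_bounded) (rule eventually_mono[OF bnd], simp)+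
  with t1 show ?thesis unfolding mu_def sd_def by simp
qed

end
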